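(* Let $r$ be either an integer with $r\ge 2$ or $r=\infty$. Then, with probability one, $$\lim_{n\to\infty}\|\hat p_n-p_0\|_r=0 .$$
   Context: For a real sequence $p=(p(k))_{k\in\mathbb N}$ (with $\mathbb N=\{0,1,2,\dots\}$) write $\|p\|_r=(\sum_{k\ge0}|p(k)|^r)^{1/r}$ for integers $r\ge1$ and $\|p\|_\infty=\sup_k|p(k)|$. For $k\ge1$ let $\Delta p(k)=p(k+1)-2p(k)+p(k-1)$. A sequence $p$ is convex if $\Delta p(k)\ge0$ for all integers $k\ge1$; let $\mathcal C$ be the set of convex sequences with $\|p\|_2<\infty$. Let $p_0$ be a convex probability mass function (pmf) on $\mathbb N$ whose support is either $\mathbb N$ or $\{0,1,\dots,S\}$ for some integer $S\ge1$. Let $X_1,X_2,\dots$ be i.i.d. with pmf $p_0$, let $p_n(j)=\frac1n\sum_{i=1}^n\mathbb 1\{X_i=j\}$ be the empirical pmf, and let the least squares estimator (LSE) $\hat p_n$ be the unique minimizer over $\mathcal C$ of $\Phi_n(p)=\frac12\sum_{j\in\mathbb N}(p_n(j)-p(j))^2$. *)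

theory Defs
  imports "HOL-Probability.Probability"
begin

definition seq_norm :: "enat \<Rightarrow> (nat \<Rightarrow> real) \<Rightarrow> real" where
  "seq_norm r p = (case r of
      enat m \<Rightarrow> (\<Sum>k. \<bar>p k\<bar> ^ m) powr (1 / real m)
    | \<infinity> \<Rightarrow> (SUP k. \<bar>p k\<bar>))"

definition Delta2 :: "(nat \<Rightarrow> real) \<Rightarrow> nat \<Rightarrow> real" where
  "Delta2 p k = p (k + 1) - 2 * p k + p (k - 1)"

definition convex_seq :: "(nat \<Rightarrow> real) \<Rightarrow> bool" where
  "convex_seq p \<longleftrightarrow> (\<forall>k\<ge>1. Delta2 p k \<ge> 0)"

definition convex_l2 :: "(nat \<Rightarrow> real) set" where
  "convex_l2 = {p. convex_seq p \<and> summable (\<lambda>k. (p k)\<^sup>2)}"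

definition is_pmf_nat :: "(nat \<Rightarrow> real) \<Rightarrow> bool" where
  "is_pmf_nat p \<longleftrightarrow> (\<forall>k. p k \<ge> 0) \<and> p sums 1"

definition empirical_pmf :: "(nat \<Rightarrow> 'a \<Rightarrow> nat) \<Rightarrow> nat \<Rightarrow> 'a \<Rightarrow> nat \<Rightarrow> real" where
  "empirical_pmf X n \<omega> j = real (card {i \<in> {1..n}. X i \<omega> = j}) / real n"

definition Phi :: "(nat \<Rightarrow> real) \<Rightarrow> (nat \<Rightarrow> real) \<Rightarrow> real" where
  "Phi q p = (1/2) * (\<Sum>j. (q j - p j)\<^sup>2)"

definition lse :: "(nat \<Rightarrow> 'a \<Rightarrow> nat) \<Rightarrow> nat \<Rightarrow> 'a \<Rightarrow> nat \<Rightarrow> real" where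
  "lse X n \<omega> = (THE p. p \<in> convex_l2 \<and>
      (\<forall>q\<in>convex_l2. Phi (empirical_pmf X n \<omega>) p \<le> Phi (empirical_pmf X n \<omega>) q))"

end

theory Submission
  imports Defs "HOL-Library.Discrete_Functions" "HOL-Real_Asymp.Real_Asymp"
begin

lemma extract_sub:
  fixes f :: "nat \<Rightarrow> nat \<Rightarrow> real" and c :: "nat \<Rightarrow> real"
  assumes "\<And>j k. \<bar>f j k\<bar> \<le> c k"
  shows "\<exists>r l. strict_mono r \<and> (\<forall>k. (\<lambda>j. f (r j) k) \<longlonglongrightarrow> l k)"
proof -
  define K where "K = PiE UNIV (\<lambda>k. {-c k..c k})"
  have "compactin (product_topology (\<lambda>k. euclidean) UNIV) K"
    unfolding K_def by (subst compactin_PiE) auto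
  hence "compact K" by (simp add: euclidean_product_topology compactin_euclidean_iff)
  hence "seq_compact K" by (rule compact_imp_seq_compact)
  moreover have "\<forall>n. f n \<in> K" using assms by (auto simp: K_def abs_le_iff) (metis minus_le_iff)
  ultimately obtain l r where "strict_mono r" "(f \<circ> r) \<longlonglongrightarrow> l"
    unfolding seq_compact_def by blast
  moreover have "(\<lambda>j. f (r j) k) \<longlonglongrightarrow> l k" for k
  proof -
    have "isCont (\<lambda>x::nat\<Rightarrow>real. x k) l"
      using continuous_on_product_coordinates[of k] continuous_on_eq_continuous_at by blast
    from isCont_tendsto_compose[OF this \<open>(f \<circ> r) \<longlonglongrightarrow> l\<close>] show ?thesis by (simp add: o_def)
  qed
  ultimately show ?thesis by blast
qed

lemma sq_diff_le: "((a::real) - b)\<^sup>2 \<le> 2 * a\<^sup>2 + 2 * b\<^sup>2"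
  using zero_le_power2[of "a+b"] by (simp add: power2_eq_square algebra_simps)

lemma summable_diff_sq:
  fixes q p :: "nat \<Rightarrow> real"
  assumes "summable (\<lambda>k. (q k)\<^sup>2)" "summable (\<lambda>k. (p k)\<^sup>2)"
  shows "summable (\<lambda>k. (q k - p k)\<^sup>2)"
proof (rule summable_comparison_test')
  show "summable (\<lambda>k. 2 * (q k)\<^sup>2 + 2 * (p k)\<^sup>2)"
    using assms by (intro summable_add summable_mult) auto
  show "norm ((q k - p k)\<^sup>2) \<le> 2 * (q k)\<^sup>2 + 2 * (p k)\<^sup>2" for k
    using sq_diff_le by simp
qed

lemma term_le_suminf:
  fixes f :: "nat \<Rightarrow> real"
  assumes "summable f" "\<And>k. 0 \<le> f k"
  shows "f k \<le> suminf f"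
  using sum_le_suminf[OF assms(1), of "{k}"] assms(2) by auto

lemma convex_l2_zero: "(\<lambda>_. 0) \<in> convex_l2"
  by (auto simp: convex_l2_def convex_seq_def Delta2_def)

lemma lse_exists:
  fixes q :: "nat \<Rightarrow> real"
  assumes qs: "summable (\<lambda>k. (q k)\<^sup>2)"
  shows "\<exists>!p. p \<in> convex_l2 \<and> (\<forall>r\<in>convex_l2. Phi q p \<le> Phi q r)"
proof -
  define F where "F p = (\<Sum>k. (q k - p k)\<^sup>2)" for p :: "nat \<Rightarrow> real"
  have Fsum: "summable (\<lambda>k. (q k - p k)\<^sup>2)" if "p \<in> convex_l2" for p
    using that qs by (intro summable_diff_sq) (auto simp: convex_l2_def)
  have F0: "0 \<le> F p" if "p \<in> convex_l2" for p
    unfolding F_def using Fsum[OF that] by (intro suminf_nonneg) auto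
  have PhiF: "Phi q p = F p / 2" for p by (simp add: Phi_def F_def)
  define m where "m = Inf (F ` convex_l2)"
  have ne: "F ` convex_l2 \<noteq> {}" using convex_l2_zero by auto
  have bdd: "bdd_below (F ` convex_l2)" using F0 by (auto intro!: bdd_belowI)
  have mle: "m \<le> F p" if "p \<in> convex_l2" for p
    unfolding m_def using bdd that by (intro cInf_lower) auto
  have "\<forall>j. \<exists>p. p \<in> convex_l2 \<and> F p < m + 1 / real (Suc j)"
  proof
    fix j
    have "Inf (F ` convex_l2) < m + 1 / real (Suc j)" unfolding m_def by simp
    from cInf_lessD[OF ne this] show "\<exists>p. p \<in> convex_l2 \<and> F p < m + 1 / real (Suc j)" by auto
  qed
  then obtain P where P: "\<And>j. P j \<in> convex_l2" "\<And>j. F (P j) < m + 1 / real (Suc j)"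
    by metis
  define A where "A = F (\<lambda>_. 0) + 1"
  have PA: "F (P j) \<le> A" for j
  proof -
    have "1 / real (Suc j) \<le> 1" by simp
    thus ?thesis using P(2)[of j] mle[OF convex_l2_zero] unfolding A_def by linarith
  qed
  have A0: "0 \<le> A" using PA[of 0] F0[OF P(1)[of 0]] by linarith
  have bnd: "\<bar>P j k\<bar> \<le> \<bar>q k\<bar> + sqrt A" for j k
  proof -
    have "(q k - P j k)\<^sup>2 \<le> A"
      using term_le_suminf[OF Fsum[OF P(1)[of j]], of k] PA[of j] unfolding F_def by simp
    hence "\<bar>q k - P j k\<bar> \<le> sqrt A" using real_sqrt_le_mono[of "(q k - P j k)\<^sup>2" A] by simp
    thus ?thesis by linarith
  qed
  obtain r l where r: "strict_mono r" and lim: "\<And>k. (\<lambda>j. P (r j) k) \<longlonglongrightarrow> l k"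
    using extract_sub[of P, OF bnd] by blast
  have conv: "convex_seq l"
    unfolding convex_seq_def
  proof (intro allI impI)
    fix k :: nat assume "k \<ge> 1"
    have "(\<lambda>j. Delta2 (P (r j)) k) \<longlonglongrightarrow> Delta2 l k"
      unfolding Delta2_def by (intro tendsto_intros lim)
    moreover have "0 \<le> Delta2 (P (r j)) k" for j
      using P(1)[of "r j"] \<open>k \<ge> 1\<close> by (auto simp: convex_l2_def convex_seq_def)
    ultimately show "0 \<le> Delta2 l k" by (intro LIMSEQ_le_const) auto
  qed
  have part: "(\<Sum>k<N. (q k - l k)\<^sup>2) \<le> m" for N
  proof -
    have "(\<lambda>j. \<Sum>k<N. (q k - P (r j) k)\<^sup>2) \<longlonglongrightarrow> (\<Sum>k<N. (q k - l k)\<^sup>2)"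
      by (intro tendsto_intros lim)
    moreover have "(\<lambda>j. m + 1 / real (Suc j)) \<longlonglongrightarrow> m + 0"
      by (intro tendsto_intros LIMSEQ_Suc[OF lim_const_over_n])
    moreover have "(\<Sum>k<N. (q k - P (r j) k)\<^sup>2) \<le> m + 1 / real (Suc j)" for j
    proof -
      have "(\<Sum>k<N. (q k - P (r j) k)\<^sup>2) \<le> F (P (r j))"
        unfolding F_def by (intro sum_le_suminf Fsum P) auto
      also have "\<dots> < m + 1 / real (Suc (r j))" by (rule P(2))
      also have "\<dots> \<le> m + 1 / real (Suc j)"
        using seq_suble[OF r, of j] by (simp add: frac_le)
      finally show ?thesis by simp
    qed
    ultimately show ?thesis by (intro tendsto_le[OF _ _ _]) auto
  qed
  have sl: "summable (\<lambda>k. (q k - l k)\<^sup>2)"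
    by (rule summableI_nonneg_bounded[OF _ part]) auto
  have Fl: "F l \<le> m" unfolding F_def by (rule suminf_le_const[OF sl part])
  have "summable (\<lambda>k. (l k)\<^sup>2)"
  proof (rule summable_comparison_test')
    show "summable (\<lambda>k. 2 * (q k)\<^sup>2 + 2 * (q k - l k)\<^sup>2)"
      using qs sl by (intro summable_add summable_mult) auto
    show "norm ((l k)\<^sup>2) \<le> 2 * (q k)\<^sup>2 + 2 * (q k - l k)\<^sup>2" for k
      using sq_diff_le[of "q k" "q k - l k"] by simp
  qed
  hence lC: "l \<in> convex_l2" using conv by (simp add: convex_l2_def)
  have ex: "l \<in> convex_l2 \<and> (\<forall>r\<in>convex_l2. Phi q l \<le> Phi q r)"
  proof (intro conjI lC ballI)
    fix r assume "r \<in> convex_l2"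
    with Fl mle have "F l \<le> F r" by (meson order_trans)
    thus "Phi q l \<le> Phi q r" by (simp add: PhiF)
  qed
  show ?thesis
  proof (rule ex1I[of _ l])
    show "l \<in> convex_l2 \<and> (\<forall>r\<in>convex_l2. Phi q l \<le> Phi q r)" by (rule ex)
  next
    fix p assume p: "p \<in> convex_l2 \<and> (\<forall>r\<in>convex_l2. Phi q p \<le> Phi q r)"
    define h where "h k = (p k + l k) / 2" for k
    have hC: "h \<in> convex_l2"
    proof -
      have "Delta2 h k = (Delta2 p k + Delta2 l k) / 2" for k
        by (simp add: Delta2_def h_def field_simps)
      hence "convex_seq h" using p lC unfolding convex_seq_def convex_l2_def
        by (metis (no_types, lifting) add_nonneg_nonneg divide_nonneg_pos mem_Collect_eq zero_less_numeral)
      moreover have "summable (\<lambda>k. (h k)\<^sup>2)"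
      proof (rule summable_comparison_test')
        show "summable (\<lambda>k. (p k)\<^sup>2 + (l k)\<^sup>2)"
          using p lC by (intro summable_add) (auto simp: convex_l2_def)
        show "norm ((h k)\<^sup>2) \<le> (p k)\<^sup>2 + (l k)\<^sup>2" for k
        proof -
          have "(p k + l k)\<^sup>2 \<le> 2*(p k)\<^sup>2 + 2*(l k)\<^sup>2" using sq_diff_le[of "p k" "-l k"] by simp
          moreover have "0 \<le> (p k)\<^sup>2" "0 \<le> (l k)\<^sup>2" by auto
          moreover have "norm ((h k)\<^sup>2) = (p k + l k)\<^sup>2 / 4" by (simp add: h_def power_divide)
          ultimately show ?thesis by linarith
        qed
      qed
      ultimately show ?thesis by (simp add: convex_l2_def)
    qed
    have eq: "(q k - h k)\<^sup>2 = (q k - p k)\<^sup>2 / 2 + (q k - l k)\<^sup>2 / 2 - (p k - l k)\<^sup>2 / 4" for k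
      unfolding h_def by (simp add: power2_eq_square field_simps)
    have sp: "summable (\<lambda>k. (q k - p k)\<^sup>2)" using Fsum p by auto
    have spl: "summable (\<lambda>k. (p k - l k)\<^sup>2)"
      using p lC by (intro summable_diff_sq) (auto simp: convex_l2_def)
    have "F h = (\<Sum>k. (q k - p k)\<^sup>2 / 2 + (q k - l k)\<^sup>2 / 2 - (p k - l k)\<^sup>2 / 4)"
      unfolding F_def eq ..
    also have "\<dots> = (\<Sum>k. (q k - p k)\<^sup>2 / 2 + (q k - l k)\<^sup>2 / 2) - (\<Sum>k. (p k - l k)\<^sup>2 / 4)"
      by (intro suminf_diff[symmetric] summable_add summable_divide sp sl spl)
    also have "(\<Sum>k. (q k - p k)\<^sup>2 / 2 + (q k - l k)\<^sup>2 / 2) = (\<Sum>k. (q k - p k)\<^sup>2 / 2) + (\<Sum>k. (q k - l k)\<^sup>2 / 2)"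
      by (intro suminf_add[symmetric] summable_divide sp sl)
    also have "(\<Sum>k. (q k - p k)\<^sup>2 / 2) = F p / 2" unfolding F_def by (intro suminf_divide sp)
    also have "(\<Sum>k. (q k - l k)\<^sup>2 / 2) = F l / 2" unfolding F_def by (intro suminf_divide sl)
    also have "(\<Sum>k. (p k - l k)\<^sup>2 / 4) = (\<Sum>k. (p k - l k)\<^sup>2) / 4" by (intro suminf_divide spl)
    finally have "F h = F p / 2 + F l / 2 - (\<Sum>k. (p k - l k)\<^sup>2) / 4" .
    moreover have "F p \<le> F h" "F l \<le> F h" "F p \<le> F l" "F l \<le> F p"
      using p ex hC lC by (auto simp: PhiF)
    ultimately have "(\<Sum>k. (p k - l k)\<^sup>2) \<le> 0" by linarith
    moreover have "0 \<le> (\<Sum>k. (p k - l k)\<^sup>2)" using spl by (intro suminf_nonneg) auto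
    ultimately have "(\<Sum>k. (p k - l k)\<^sup>2) = 0" by linarith
    hence "\<forall>k. (p k - l k)\<^sup>2 = 0" using suminf_eq_zero_iff[OF spl] by auto
    thus "p = l" by auto
  qed
qed
lemma norm_bound:
  fixes d :: "nat \<Rightarrow> real" and r :: enat
  assumes sd: "summable (\<lambda>k. (d k)\<^sup>2)" and r: "r \<ge> 2"
  shows "0 \<le> seq_norm r d \<and> seq_norm r d \<le> sqrt (\<Sum>k. (d k)\<^sup>2)"
proof -
  define D where "D = (\<Sum>k. (d k)\<^sup>2)"
  have D0: "0 \<le> D" unfolding D_def using sd by (intro suminf_nonneg) auto
  have dk: "\<bar>d k\<bar> \<le> sqrt D" for k
  proof -
    have "(d k)\<^sup>2 \<le> D" unfolding D_def by (rule term_le_suminf[OF sd]) auto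
    thus ?thesis using real_sqrt_le_mono[of "(d k)\<^sup>2" D] by simp
  qed
  show ?thesis
  proof (cases r)
    case infinity
    have bdd: "bdd_above (range (\<lambda>k. \<bar>d k\<bar>))" using dk by (auto intro!: bdd_aboveI)
    have "\<bar>d 0\<bar> \<le> (SUP k. \<bar>d k\<bar>)" by (rule cSUP_upper[OF _ bdd]) auto
    moreover have "(SUP k. \<bar>d k\<bar>) \<le> sqrt D" by (rule cSUP_least) (auto simp: dk)
    ultimately show ?thesis using infinity by (simp add: seq_norm_def D_def)
  next
    case (enat m)
    with r have m2: "m \<ge> 2" by (simp add: numeral_eq_enat)
    define s where "s = sqrt D"
    have s0: "0 \<le> s" using D0 by (simp add: s_def)
    have pw: "\<bar>d k\<bar> ^ m \<le> s ^ (m - 2) * (d k)\<^sup>2" for k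
    proof -
      have "\<bar>d k\<bar> ^ m = \<bar>d k\<bar> ^ (m-2) * (d k)\<^sup>2"
        using m2 by (metis le_add_diff_inverse2 power2_abs power_add)
      also have "\<dots> \<le> s ^ (m - 2) * (d k)\<^sup>2"
        using dk[of k] by (intro mult_right_mono power_mono) (auto simp: s_def)
      finally show ?thesis .
    qed
    have sm: "summable (\<lambda>k. \<bar>d k\<bar> ^ m)"
      by (rule summable_comparison_test'[OF summable_mult[OF sd, of "s ^ (m-2)"]]) (use pw in auto)
    have "(\<Sum>k. \<bar>d k\<bar> ^ m) \<le> (\<Sum>k. s ^ (m - 2) * (d k)\<^sup>2)"
      by (intro suminf_le sm summable_mult sd pw)
    also have "\<dots> = s ^ (m-2) * D" unfolding D_def by (rule suminf_mult[OF sd])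
    also have "D = s ^ 2" using D0 by (simp add: s_def)
    also have "s ^ (m-2) * s ^ 2 = s ^ m" using m2 by (metis le_add_diff_inverse2 power_add)
    finally have le: "(\<Sum>k. \<bar>d k\<bar> ^ m) \<le> s ^ m" .
    have S0: "0 \<le> (\<Sum>k. \<bar>d k\<bar> ^ m)" by (intro suminf_nonneg sm) auto
    have "(\<Sum>k. \<bar>d k\<bar> ^ m) powr (1 / real m) \<le> (s ^ m) powr (1 / real m)"
      by (intro powr_mono2 le S0) auto
    also have "(s ^ m) powr (1 / real m) = s"
    proof (cases "s = 0")
      case True thus ?thesis using m2 by simp
    next
      case False
      hence "0 < s" using s0 by simp
      hence "(s ^ m) = s powr (real m)" by (simp add: powr_realpow)
      thus ?thesis using m2 \<open>0 < s\<close> by (simp add: powr_powr)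
    qed
    finally show ?thesis using enat by (simp add: seq_norm_def s_def D_def)
  qed
qed

lemma lse_bound:
  fixes q p0 ph :: "nat \<Rightarrow> real"
  assumes qs: "summable (\<lambda>k. (q k)\<^sup>2)" and p0: "p0 \<in> convex_l2" and ph: "ph \<in> convex_l2"
    and le: "Phi q ph \<le> Phi q p0"
  shows "summable (\<lambda>k. (ph k - p0 k)\<^sup>2) \<and> (\<Sum>k. (ph k - p0 k)\<^sup>2) \<le> 4 * (\<Sum>k. (q k - p0 k)\<^sup>2)"
proof -
  have s0: "summable (\<lambda>k. (p0 k)\<^sup>2)" "summable (\<lambda>k. (ph k)\<^sup>2)"
    using p0 ph by (auto simp: convex_l2_def)
  have sum: "summable (\<lambda>k. (a k - b k)\<^sup>2)" if "summable (\<lambda>k. (a k)\<^sup>2)" "summable (\<lambda>k. (b k)\<^sup>2)"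
    for a b :: "nat \<Rightarrow> real"
  proof (rule summable_comparison_test')
    show "summable (\<lambda>k. 2 * (a k)\<^sup>2 + 2 * (b k)\<^sup>2)"
      using that by (intro summable_add summable_mult) auto
    show "norm ((a k - b k)\<^sup>2) \<le> 2 * (a k)\<^sup>2 + 2 * (b k)\<^sup>2" for k
      using sq_diff_le by simp
  qed
  have A: "summable (\<lambda>k. (q k - ph k)\<^sup>2)" "summable (\<lambda>k. (q k - p0 k)\<^sup>2)"
    "summable (\<lambda>k. (ph k - p0 k)\<^sup>2)"
    using sum qs s0 by auto
  have pt: "(ph k - p0 k)\<^sup>2 \<le> 2 * (q k - ph k)\<^sup>2 + 2 * (q k - p0 k)\<^sup>2" for k
    using sq_diff_le[of "ph k - q k" "p0 k - q k"] by (simp add: power2_commute)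
  have "(\<Sum>k. (ph k - p0 k)\<^sup>2) \<le> (\<Sum>k. 2 * (q k - ph k)\<^sup>2 + 2 * (q k - p0 k)\<^sup>2)"
    by (intro suminf_le pt A summable_add summable_mult)
  also have "\<dots> = 2 * (\<Sum>k. (q k - ph k)\<^sup>2) + 2 * (\<Sum>k. (q k - p0 k)\<^sup>2)"
    using A by (subst suminf_add[symmetric]) (auto intro: summable_mult simp: suminf_mult)
  also have "\<dots> \<le> 4 * (\<Sum>k. (q k - p0 k)\<^sup>2)" using le by (simp add: Phi_def)
  finally show ?thesis using A by simp
qed

lemma scheffe:
  fixes e :: "nat \<Rightarrow> nat \<Rightarrow> real" and p :: "nat \<Rightarrow> real"
  assumes e0: "\<And>n k. 0 \<le> e n k" and e1: "\<And>n. n \<ge> 1 \<Longrightarrow> e n sums 1"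
    and p0: "\<And>k. 0 \<le> p k" and p1: "p sums 1"
    and lim: "\<And>k. (\<lambda>n. e n k) \<longlonglongrightarrow> p k"
  shows "(\<lambda>n. \<Sum>k. (e n k - p k)\<^sup>2) \<longlonglongrightarrow> 0"
proof -
  have ps: "summable p" using p1 by (simp add: sums_iff)
  have p_le: "p k \<le> 1" for k using term_le_suminf[OF ps p0, of k] p1 by (simp add: sums_iff)
  have e_le: "e n k \<le> 1" if "n \<ge> 1" for n k
    using term_le_suminf[of "e n" k] e1[OF that] e0 by (simp add: sums_iff)
  have es: "summable (e n)" if "n \<ge> 1" for n using e1[OF that] by (simp add: sums_iff)
  have sq_le: "(e n k - p k)\<^sup>2 \<le> e n k + p k" if "n \<ge> 1" for n k
  proof -
    have "(e n k - p k)\<^sup>2 = \<bar>e n k - p k\<bar> * \<bar>e n k - p k\<bar>" by (simp add: power2_eq_square)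
    also have "\<dots> \<le> \<bar>e n k - p k\<bar> * 1"
      using e_le[OF that, of k] p_le[of k] e0[of n k] p0[of k]
      by (intro mult_left_mono) auto
    also have "\<dots> \<le> e n k + p k" using e0[of n k] p0[of k] by simp
    finally show ?thesis .
  qed
  have ss: "summable (\<lambda>k. (e n k - p k)\<^sup>2)" if "n \<ge> 1" for n
    by (rule summable_comparison_test'[OF summable_add[OF es[OF that] ps]]) (use sq_le[OF that] in auto)
  show ?thesis
  proof (rule order_tendstoI)
    fix a :: real assume "a < 0"
    show "\<forall>\<^sub>F n in sequentially. a < (\<Sum>k. (e n k - p k)\<^sup>2)"
    proof (rule eventually_sequentiallyI[of 1])
      fix n :: nat assume "n \<ge> 1"
      hence "0 \<le> (\<Sum>k. (e n k - p k)\<^sup>2)" using ss by (intro suminf_nonneg) auto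
      thus "a < (\<Sum>k. (e n k - p k)\<^sup>2)" using \<open>a < 0\<close> by linarith
    qed
  next
    fix eps :: real assume "0 < eps"
    obtain N where N: "norm (\<Sum>i. p (i + N)) < eps / 4"
      using suminf_exist_split[OF _ ps, of "eps/4"] \<open>0 < eps\<close> by auto
    define T where "T = (\<Sum>i. p (i + N))"
    have T: "T = 1 - (\<Sum>i<N. p i)" using suminf_split_initial_segment[OF ps, of N] p1
      by (simp add: T_def sums_iff)
    have T4: "T < eps / 4" using N by (simp add: T_def)
    have h1: "(\<lambda>n. \<Sum>k<N. (e n k - p k)\<^sup>2) \<longlonglongrightarrow> (\<Sum>k<N. (p k - p k)\<^sup>2)"
      by (intro tendsto_intros lim)
    have h2: "(\<lambda>n. 1 - (\<Sum>k<N. e n k)) \<longlonglongrightarrow> T"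
      unfolding T by (intro tendsto_intros lim)
    have ev1: "\<forall>\<^sub>F n in sequentially. (\<Sum>k<N. (e n k - p k)\<^sup>2) < eps / 4"
      using order_tendstoD(2)[OF h1, of "eps/4"] \<open>0 < eps\<close> by simp
    have ev2: "\<forall>\<^sub>F n in sequentially. 1 - (\<Sum>k<N. e n k) < eps / 2"
    proof -
      have "T < eps / 2" using T4 \<open>0 < eps\<close> by linarith
      from order_tendstoD(2)[OF h2 this] show ?thesis .
    qed
    have ev3: "\<forall>\<^sub>F n in sequentially. n \<ge> 1" by (rule eventually_ge_at_top)
    show "\<forall>\<^sub>F n in sequentially. (\<Sum>k. (e n k - p k)\<^sup>2) < eps"
      using ev1 ev2 ev3
    proof eventually_elim
      case (elim n)
      note es' = es[OF elim(3)]
      have split: "(\<Sum>k. (e n k - p k)\<^sup>2) = (\<Sum>k. (e n (k+N) - p (k+N))\<^sup>2) + (\<Sum>k<N. (e n k - p k)\<^sup>2)"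
        using suminf_split_initial_segment[OF ss[OF elim(3)], of N] by simp
      have "(\<Sum>k. (e n (k+N) - p (k+N))\<^sup>2) \<le> (\<Sum>k. e n (k+N) + p (k+N))"
        using ss[OF elim(3)] es' ps sq_le[OF elim(3)]
        by (intro suminf_le summable_add) (auto intro: summable_ignore_initial_segment)
      also have "\<dots> = (\<Sum>k. e n (k+N)) + T" unfolding T_def
        using es' ps by (intro suminf_add[symmetric]) (auto intro: summable_ignore_initial_segment)
      also have "(\<Sum>k. e n (k+N)) = 1 - (\<Sum>k<N. e n k)"
        using suminf_split_initial_segment[OF es', of N] e1[OF elim(3)] by (simp add: sums_iff)
      finally show ?case using split elim(1) elim(2) T4 by linarith
    qed
  qed
qed
lemma interp:
  fixes y :: "nat \<Rightarrow> real"
  assumes y0: "\<And>i. i \<ge> 1 \<Longrightarrow> 0 \<le> y i"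
    and A: "(\<lambda>m. (\<Sum>i\<in>{1..(m+1)\<^sup>2}. y i) / real ((m+1)\<^sup>2)) \<longlonglongrightarrow> p"
  shows "(\<lambda>n. (\<Sum>i\<in>{1..n}. y i) / real n) \<longlonglongrightarrow> p"
proof -
  define S where "S n = (\<Sum>i\<in>{1..n}. y i)" for n
  define Am where "Am m = S ((m+1)\<^sup>2) / real ((m+1)\<^sup>2)" for m
  have S0: "0 \<le> S n" for n unfolding S_def by (intro sum_nonneg y0) auto
  have Smono: "S a \<le> S b" if "a \<le> b" for a b
    unfolding S_def using that by (intro sum_mono2 y0) auto
  have Alim: "Am \<longlonglongrightarrow> p" using A unfolding Am_def[abs_def] S_def[abs_def] .
  define L where "L m = Am m * (real (m+1) / real (m+2))\<^sup>2" for m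
  define U where "U m = Am (m+1) * (real (m+2) / real (m+1))\<^sup>2" for m
  have f1: "(\<lambda>m. (real (m+1) / real (m+2))\<^sup>2) \<longlonglongrightarrow> 1" by real_asymp
  have f2: "(\<lambda>m. (real (m+2) / real (m+1))\<^sup>2) \<longlonglongrightarrow> 1" by real_asymp
  have Llim: "L \<longlonglongrightarrow> p" unfolding L_def using tendsto_mult[OF Alim f1] by simp
  have Ulim: "U \<longlonglongrightarrow> p" unfolding U_def
    using tendsto_mult[OF LIMSEQ_Suc[OF Alim] f2] by simp
  define g where "g n = floor_sqrt n - 1" for n
  have glim: "filterlim g at_top sequentially"
    unfolding filterlim_at_top
  proof
    fix Z :: nat
    show "\<forall>\<^sub>F n in sequentially. Z \<le> g n"
    proof (rule eventually_sequentiallyI[of "(Z+1)\<^sup>2"])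
      fix n assume "(Z+1)\<^sup>2 \<le> n"
      hence "Z + 1 \<le> floor_sqrt n" by (simp add: le_floor_sqrt_iff)
      thus "Z \<le> g n" by (simp add: g_def)
    qed
  qed
  have L2: "(\<lambda>n. L (g n)) \<longlonglongrightarrow> p" by (rule filterlim_compose[OF Llim glim])
  have U2: "(\<lambda>n. U (g n)) \<longlonglongrightarrow> p" by (rule filterlim_compose[OF Ulim glim])
  have bounds: "L (g n) \<le> S n / real n \<and> S n / real n \<le> U (g n)" if "n \<ge> 1" for n
  proof -
    define t where "t = floor_sqrt n"
    have t1: "t \<ge> 1" using that by (simp add: t_def Suc_le_eq)
    have gt: "g n + 1 = t" "g n + 2 = t + 1" using t1 by (auto simp: g_def t_def)
    have lo: "t\<^sup>2 \<le> n" and hi: "n < (t+1)\<^sup>2"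
      using floor_sqrt_power2_le[of n] Suc_floor_sqrt_power2_gt[of n] by (auto simp: t_def)
    have rt: "real t \<ge> 1" using t1 by simp
    have rn: "real n \<ge> 1" using that by simp
    have lo': "(real t)\<^sup>2 \<le> real n" using lo by (metis of_nat_le_iff of_nat_power)
    have hi': "real n \<le> (real t + 1)\<^sup>2" using hi
      by (metis less_imp_le of_nat_Suc of_nat_le_iff of_nat_power Suc_eq_plus1 add.commute)
    have "L (g n) = S (t\<^sup>2) / (real t)\<^sup>2 * (real t / (real t + 1))\<^sup>2"
      unfolding L_def Am_def gt by (simp add: gt add.commute)
    also have "\<dots> = S (t\<^sup>2) / (real t + 1)\<^sup>2" using rt by (simp add: power_divide field_simps)
    also have "\<dots> \<le> S n / (real t + 1)\<^sup>2" using Smono[OF lo] by (simp add: divide_right_mono)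
    also have "\<dots> \<le> S n / real n" using S0[of n] rn hi' by (intro divide_left_mono) auto
    finally have 1: "L (g n) \<le> S n / real n" .
    have "U (g n) = S ((t+1)\<^sup>2) / (real t + 1)\<^sup>2 * ((real t + 1) / real t)\<^sup>2"
      unfolding U_def Am_def gt by (simp add: gt add.commute)
    also have "\<dots> = S ((t+1)\<^sup>2) / (real t)\<^sup>2" using rt by (simp add: power_divide field_simps)
    finally have "U (g n) = S ((t+1)\<^sup>2) / (real t)\<^sup>2" .
    moreover have "S n / real n \<le> S n / (real t)\<^sup>2"
    proof -
      have "0 < real n * (real t)\<^sup>2" using rn rt by (intro mult_pos_pos) auto
      thus ?thesis using S0[of n] lo' by (intro divide_left_mono) auto
    qed
    moreover have "S n / (real t)\<^sup>2 \<le> S ((t+1)\<^sup>2) / (real t)\<^sup>2"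
      using Smono[of n "(t+1)\<^sup>2"] hi by (simp add: divide_right_mono)
    ultimately show ?thesis using 1 by linarith
  qed
  have "(\<lambda>n. S n / real n) \<longlonglongrightarrow> p"
  proof (rule tendsto_sandwich[OF _ _ L2 U2])
    show "\<forall>\<^sub>F n in sequentially. L (g n) \<le> S n / real n"
      using bounds by (intro eventually_sequentiallyI[of 1]) auto
    show "\<forall>\<^sub>F n in sequentially. S n / real n \<le> U (g n)"
      using bounds by (intro eventually_sequentiallyI[of 1]) auto
  qed
  thus ?thesis by (simp add: S_def)
qed
lemma (in prob_space) var_bound:
  fixes Y :: "nat \<Rightarrow> 'a \<Rightarrow> real"
  assumes Ym: "\<And>i. i \<ge> 1 \<Longrightarrow> Y i \<in> borel_measurable M"
    and Yb: "\<And>i \<omega>. i \<ge> 1 \<Longrightarrow> 0 \<le> Y i \<omega> \<and> Y i \<omega> \<le> 1"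
    and EY: "\<And>i. i \<ge> 1 \<Longrightarrow> expectation (Y i) = p"
    and EYY: "\<And>i j. i \<ge> 1 \<Longrightarrow> j \<ge> 1 \<Longrightarrow> i \<noteq> j \<Longrightarrow> expectation (\<lambda>\<omega>. Y i \<omega> * Y j \<omega>) = p\<^sup>2"
  shows "expectation (\<lambda>\<omega>. (\<Sum>i\<in>{1..N}. (Y i \<omega> - p))\<^sup>2) \<le> real N"
proof -
  have intY: "integrable M (Y i)" if "i \<ge> 1" for i
    using Yb[OF that] Ym[OF that] by (intro integrable_const_bound[of _ 1]) auto
  have p0: "0 \<le> p" using EY[of 1] Yb[of 1] by (metis integral_nonneg_AE AE_I2 order_refl)
  have p1: "p \<le> 1" using EY[of 1] Yb[of 1] intY[of 1]
    by (metis integral_le_const AE_I2 order_refl)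
  define C where "C i j \<omega> = (Y i \<omega> - p) * (Y j \<omega> - p)" for i j \<omega>
  have Cb: "\<bar>C i j \<omega>\<bar> \<le> 1" if "i \<ge> 1" "j \<ge> 1" for i j \<omega>
  proof -
    have "\<bar>Y i \<omega> - p\<bar> \<le> 1" "\<bar>Y j \<omega> - p\<bar> \<le> 1" using Yb[OF that(1), of \<omega>] Yb[OF that(2), of \<omega>] p0 p1 by auto
    hence "\<bar>Y i \<omega> - p\<bar> * \<bar>Y j \<omega> - p\<bar> \<le> 1 * 1" by (intro mult_mono) auto
    thus ?thesis by (simp add: C_def abs_mult)
  qed
  have intC: "integrable M (C i j)" if "i \<ge> 1" "j \<ge> 1" for i j
  proof (rule integrable_const_bound[of _ 1])
    show "AE x in M. norm (C i j x) \<le> 1" using Cb[OF that] by auto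
    show "C i j \<in> borel_measurable M" unfolding C_def[abs_def]
      using Ym[OF that(1)] Ym[OF that(2)] by (intro borel_measurable_times borel_measurable_diff) auto
  qed
  have intYY: "integrable M (\<lambda>\<omega>. Y i \<omega> * Y j \<omega>)" if "i \<ge> 1" "j \<ge> 1" for i j
    using Yb[OF that(1)] Yb[OF that(2)] Ym[OF that(1)] Ym[OF that(2)]
    by (intro integrable_const_bound[of _ 1]) (auto simp: abs_mult intro!: mult_le_one)
  have off: "expectation (C i j) = 0" if "i \<ge> 1" "j \<ge> 1" "i \<noteq> j" for i j
  proof -
    have "C i j = (\<lambda>\<omega>. (Y i \<omega> * Y j \<omega> - p * Y j \<omega>) - (p * Y i \<omega> - p\<^sup>2))"
      by (auto simp: C_def algebra_simps power2_eq_square)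
    hence "expectation (C i j) = (expectation (\<lambda>\<omega>. Y i \<omega> * Y j \<omega>) - p * expectation (Y j)) - (p * expectation (Y i) - p\<^sup>2)"
      using intYY[OF that(1,2)] intY[OF that(1)] intY[OF that(2)]
      by (simp add: prob_space)
    thus ?thesis using EYY[OF that] EY[OF that(1)] EY[OF that(2)] by (simp add: power2_eq_square)
  qed
  have diag: "expectation (C i i) \<le> 1" if "i \<ge> 1" for i
  proof -
    have "\<And>\<omega>. C i i \<omega> \<le> 1" using Cb[OF that that] abs_le_D1 by blast
    thus ?thesis using intC[OF that that] by (intro integral_le_const AE_I2) auto
  qed
  have "expectation (\<lambda>\<omega>. (\<Sum>i\<in>{1..N}. (Y i \<omega> - p))\<^sup>2)
      = expectation (\<lambda>\<omega>. \<Sum>i\<in>{1..N}. \<Sum>j\<in>{1..N}. C i j \<omega>)"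
    by (simp add: power2_eq_square sum_product C_def)
  also have "\<dots> = (\<Sum>i\<in>{1..N}. \<Sum>j\<in>{1..N}. expectation (C i j))"
  proof -
    have "expectation (\<lambda>\<omega>. \<Sum>i\<in>{1..N}. \<Sum>j\<in>{1..N}. C i j \<omega>) = (\<Sum>i\<in>{1..N}. expectation (\<lambda>\<omega>. \<Sum>j\<in>{1..N}. C i j \<omega>))"
      by (rule Bochner_Integration.integral_sum[where f="\<lambda>i \<omega>. \<Sum>j\<in>{1..N}. C i j \<omega>"]) (auto intro!: integrable_sum intC)
    also have "\<dots> = (\<Sum>i\<in>{1..N}. \<Sum>j\<in>{1..N}. expectation (C i j))"
      by (intro sum.cong refl Bochner_Integration.integral_sum) (auto intro!: intC)
    finally show ?thesis .
  qed
  also have "\<dots> = (\<Sum>i\<in>{1..N}. expectation (C i i))"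
  proof (rule sum.cong[OF refl])
    fix i assume i: "i \<in> {1..N}"
    have "(\<Sum>j\<in>{1..N}. expectation (C i j)) = (\<Sum>j\<in>{1..N}. if i = j then expectation (C i i) else 0)"
      using i off by (intro sum.cong) auto
    also have "\<dots> = expectation (C i i)" using i by simp
    finally show "(\<Sum>j\<in>{1..N}. expectation (C i j)) = expectation (C i i)" .
  qed
  also have "\<dots> \<le> (\<Sum>i\<in>{1..N}. 1)" using diag by (intro sum_mono) auto
  finally show ?thesis by simp
qed

lemma (in prob_space) slln01:
  fixes Y :: "nat \<Rightarrow> 'a \<Rightarrow> real"
  assumes Ym: "\<And>i. i \<ge> 1 \<Longrightarrow> Y i \<in> borel_measurable M"
    and Yb: "\<And>i \<omega>. i \<ge> 1 \<Longrightarrow> 0 \<le> Y i \<omega> \<and> Y i \<omega> \<le> 1"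
    and EY: "\<And>i. i \<ge> 1 \<Longrightarrow> expectation (Y i) = p"
    and EYY: "\<And>i j. i \<ge> 1 \<Longrightarrow> j \<ge> 1 \<Longrightarrow> i \<noteq> j \<Longrightarrow> expectation (\<lambda>\<omega>. Y i \<omega> * Y j \<omega>) = p\<^sup>2"
  shows "AE \<omega> in M. (\<lambda>n. (\<Sum>i\<in>{1..n}. Y i \<omega>) / real n) \<longlonglongrightarrow> p"
proof -
  define W where "W N \<omega> = (\<Sum>i\<in>{1..N}. (Y i \<omega> - p))\<^sup>2" for N \<omega>
  define Z where "Z m \<omega> = ((\<Sum>i\<in>{1..(m+1)\<^sup>2}. Y i \<omega>) / real ((m+1)\<^sup>2) - p)\<^sup>2" for m \<omega>
  have p0: "0 \<le> p" using EY[of 1] Yb[of 1] by (metis integral_nonneg_AE AE_I2 order_refl)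
  have intY: "integrable M (Y i)" if "i \<ge> 1" for i
    using Yb[OF that] Ym[OF that] by (intro integrable_const_bound[of _ 1]) auto
  have p1: "p \<le> 1" using EY[of 1] Yb[of 1] intY[of 1]
    by (metis integral_le_const AE_I2 order_refl)
  have Wm: "W N \<in> borel_measurable M" for N
    unfolding W_def using Ym by (intro borel_measurable_power borel_measurable_sum borel_measurable_diff) auto
  have Wb: "\<bar>W N \<omega>\<bar> \<le> (real N)\<^sup>2" for N \<omega>
  proof -
    have "\<bar>\<Sum>i\<in>{1..N}. (Y i \<omega> - p)\<bar> \<le> (\<Sum>i\<in>{1..N}. \<bar>Y i \<omega> - p\<bar>)" by (rule sum_abs)
    also have "\<dots> \<le> (\<Sum>i\<in>{1..N}. 1)"
    proof (intro sum_mono)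
      fix i assume "i \<in> {1..N}"
      hence "0 \<le> Y i \<omega> \<and> Y i \<omega> \<le> 1" using Yb by auto
      thus "\<bar>Y i \<omega> - p\<bar> \<le> 1" using p0 p1 by auto
    qed
    finally have "\<bar>\<Sum>i\<in>{1..N}. (Y i \<omega> - p)\<bar> \<le> real N" by simp
    hence "\<bar>\<Sum>i\<in>{1..N}. (Y i \<omega> - p)\<bar>\<^sup>2 \<le> (real N)\<^sup>2" by (intro power_mono) auto
    thus ?thesis by (simp add: W_def)
  qed
  have intW: "integrable M (W N)" for N
    using Wb Wm by (intro integrable_const_bound[of _ "(real N)\<^sup>2"]) auto
  have ZW: "Z m \<omega> = W ((m+1)\<^sup>2) \<omega> / (real ((m+1)\<^sup>2))\<^sup>2" for m \<omega>
  proof -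
    define N where "N = (m+1)\<^sup>2"
    have N0: "real N > 0" by (simp add: N_def)
    have "(\<Sum>i\<in>{1..N}. (Y i \<omega> - p)) = (\<Sum>i\<in>{1..N}. Y i \<omega>) - real N * p"
      by (simp add: sum_subtractf)
    hence "(\<Sum>i\<in>{1..N}. Y i \<omega>) / real N - p = (\<Sum>i\<in>{1..N}. (Y i \<omega> - p)) / real N"
      using N0 by (simp add: field_simps)
    thus ?thesis by (simp add: Z_def W_def N_def power_divide)
  qed
  have Zm: "Z m \<in> borel_measurable M" for m
    unfolding ZW[abs_def] using Wm by measurable
  have Z0: "0 \<le> Z m \<omega>" for m \<omega> by (simp add: Z_def)
  have EZ: "expectation (Z m) \<le> inverse (real (Suc m) ^ 2)" for m
  proof -
    have "expectation (Z m) = expectation (W ((m+1)\<^sup>2)) / (real ((m+1)\<^sup>2))\<^sup>2"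
      unfolding ZW by simp
    also have "\<dots> \<le> real ((m+1)\<^sup>2) / (real ((m+1)\<^sup>2))\<^sup>2"
      using var_bound[OF Ym Yb EY EYY, where N="(m+1)\<^sup>2"] unfolding W_def
      by (intro divide_right_mono) auto
    also have "\<dots> = inverse (real (Suc m) ^ 2)"
    proof -
      have e: "real ((m+1)\<^sup>2) = real (Suc m) ^ 2" by simp
      have inv: "x / x\<^sup>2 = inverse x" if "x > 0" for x :: real
        using that by (simp add: power2_eq_square field_simps)
      show ?thesis unfolding e by (rule inv) simp
    qed
    finally show ?thesis .
  qed
  have intZ: "integrable M (Z m)" for m unfolding ZW[abs_def] using intW by simp
  have sumI: "summable (\<lambda>m. inverse (real (Suc m) ^ 2))"
  proof -
    have "summable (\<lambda>n. inverse (real n ^ 2))" by (rule inverse_power_summable) simp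
    thus ?thesis by (subst summable_Suc_iff)
  qed
  have "(\<integral>\<^sup>+\<omega>. (\<Sum>m. ennreal (Z m \<omega>)) \<partial>M) = (\<Sum>m. \<integral>\<^sup>+\<omega>. ennreal (Z m \<omega>) \<partial>M)"
    by (rule nn_integral_suminf) (use Zm in measurable)
  also have "\<dots> = (\<Sum>m. ennreal (expectation (Z m)))"
    using intZ Z0 by (subst nn_integral_eq_integral) auto
  also have "\<dots> \<le> (\<Sum>m. ennreal (inverse (real (Suc m) ^ 2)))"
    using EZ by (intro suminf_le ennreal_leI) auto
  also have "\<dots> = ennreal (\<Sum>m. inverse (real (Suc m) ^ 2))"
    by (rule suminf_ennreal2[OF _ sumI]) auto
  finally have le: "(\<integral>\<^sup>+\<omega>. (\<Sum>m. ennreal (Z m \<omega>)) \<partial>M) \<le> ennreal (\<Sum>m. inverse (real (Suc m) ^ 2))" .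
  have fin: "(\<integral>\<^sup>+\<omega>. (\<Sum>m. ennreal (Z m \<omega>)) \<partial>M) \<noteq> \<infinity>"
  proof
    assume "(\<integral>\<^sup>+\<omega>. (\<Sum>m. ennreal (Z m \<omega>)) \<partial>M) = \<infinity>"
    with le have "\<infinity> \<le> ennreal (\<Sum>m. inverse (real (Suc m) ^ 2))" by simp
    thus False by (simp add: top_unique)
  qed
  have "AE \<omega> in M. (\<Sum>m. ennreal (Z m \<omega>)) \<noteq> \<infinity>"
    by (rule nn_integral_PInf_AE[OF _ fin]) (use Zm in measurable)
  thus ?thesis
  proof (rule AE_mp, intro AE_I2 impI)
    fix \<omega> assume "(\<Sum>m. ennreal (Z m \<omega>)) \<noteq> \<infinity>"
    hence "summable (\<lambda>m. Z m \<omega>)" using Z0 by (intro summable_suminf_not_top) auto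
    hence "(\<lambda>m. Z m \<omega>) \<longlonglongrightarrow> 0" by (rule summable_LIMSEQ_zero)
    hence "(\<lambda>m. sqrt (Z m \<omega>)) \<longlonglongrightarrow> sqrt 0" by (intro tendsto_real_sqrt)
    hence "(\<lambda>m. \<bar>(\<Sum>i\<in>{1..(m+1)\<^sup>2}. Y i \<omega>) / real ((m+1)\<^sup>2) - p\<bar>) \<longlonglongrightarrow> 0"
      by (simp add: Z_def)
    hence "(\<lambda>m. (\<Sum>i\<in>{1..(m+1)\<^sup>2}. Y i \<omega>) / real ((m+1)\<^sup>2) - p) \<longlonglongrightarrow> 0"
      by (simp only: tendsto_rabs_zero_iff)
    hence "(\<lambda>m. ((\<Sum>i\<in>{1..(m+1)\<^sup>2}. Y i \<omega>) / real ((m+1)\<^sup>2) - p) + p) \<longlonglongrightarrow> 0 + p"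
      by (intro tendsto_add) auto
    hence "(\<lambda>m. (\<Sum>i\<in>{1..(m+1)\<^sup>2}. Y i \<omega>) / real ((m+1)\<^sup>2)) \<longlonglongrightarrow> p" by simp
    thus "(\<lambda>n. (\<Sum>i\<in>{1..n}. Y i \<omega>) / real n) \<longlonglongrightarrow> p"
      by (rule interp[rotated]) (use Yb in auto)
  qed
qed
lemma card_filter_sum:
  "finite A \<Longrightarrow> real (card {i\<in>A. P i}) = (\<Sum>i\<in>A. if P i then 1 else 0)"
  by (simp add: sum.If_cases Int_def)

lemma sum_card_partition:
  fixes f :: "nat \<Rightarrow> nat"
  shows "(\<Sum>k\<in>f ` {1..n}. real (card {i\<in>{1..n}. f i = k})) = real n"
proof -
  have "(\<Sum>k\<in>f ` {1..n}. real (card {i\<in>{1..n}. f i = k}))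
      = (\<Sum>k\<in>f ` {1..n}. \<Sum>i\<in>{1..n}. if f i = k then 1 else 0)"
    by (intro sum.cong refl card_filter_sum) auto
  also have "\<dots> = (\<Sum>i\<in>{1..n}. \<Sum>k\<in>f ` {1..n}. if f i = k then 1 else 0)"
    by (rule sum.swap)
  also have "\<dots> = (\<Sum>i\<in>{1..n}. 1)"
    by (intro sum.cong refl) (auto simp: sum.delta)
  finally show ?thesis by simp
qed

theorem proposition2:
  fixes M :: "'a measure" and X :: "nat \<Rightarrow> 'a \<Rightarrow> nat" and p0 :: "nat \<Rightarrow> real" and r :: enat
  assumes "prob_space M"
    and pmf0: "is_pmf_nat p0"
    and conv0: "convex_seq p0"
    and supp0: "{k. p0 k > 0} = UNIV \<or> (\<exists>S::nat. S \<ge> 1 \<and> {k. p0 k > 0} = {0..S})"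
    and meas: "\<And>i. i \<ge> 1 \<Longrightarrow> X i \<in> measurable M (count_space UNIV)"
    and indep: "prob_space.indep_vars M (\<lambda>_. count_space UNIV) X {1..}"
    and distr: "\<And>i k. i \<ge> 1 \<Longrightarrow> measure M {\<omega> \<in> space M. X i \<omega> = k} = p0 k"
    and r: "r \<ge> 2"
  shows "AE \<omega> in M. (\<lambda>n. seq_norm r (\<lambda>k. lse X n \<omega> k - p0 k)) \<longlonglongrightarrow> 0"
proof -
  interpret prob_space M by fact
  have p0nn: "\<And>k. 0 \<le> p0 k" and p0s: "p0 sums 1" using pmf0 by (auto simp: is_pmf_nat_def)
  have p0sum: "summable p0" using p0s by (simp add: sums_iff)
  have p0le: "p0 k \<le> 1" for k using term_le_suminf[OF p0sum p0nn, of k] p0s by (simp add: sums_iff)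
  have "summable (\<lambda>k. (p0 k)\<^sup>2)"
  proof (rule summable_comparison_test'[OF p0sum])
    fix k show "norm ((p0 k)\<^sup>2) \<le> p0 k"
      using mult_left_le[OF p0le[of k] p0nn[of k]] by (simp add: power2_eq_square)
  qed
  hence p0C: "p0 \<in> convex_l2" using conv0 by (simp add: convex_l2_def)
  define E where "E k i \<omega> = (indicator {\<omega>\<in>space M. X i \<omega> = k} \<omega> :: real)" for k i \<omega>
  have setsX: "{\<omega>\<in>space M. X i \<omega> = k} \<in> sets M" if "i \<ge> 1" for i k
  proof -
    have "X i -` {k} \<inter> space M \<in> sets M" using measurable_sets[OF meas[OF that], of "{k}"] by simp
    moreover have "X i -` {k} \<inter> space M = {\<omega>\<in>space M. X i \<omega> = k}" by auto
    ultimately show ?thesis by simp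
  qed
  have lim_k: "AE \<omega> in M. (\<lambda>n. (\<Sum>i\<in>{1..n}. E k i \<omega>) / real n) \<longlonglongrightarrow> p0 k" for k
  proof (rule slln01)
    show "E k i \<in> borel_measurable M" if "i \<ge> 1" for i
      unfolding E_def[abs_def] using setsX[OF that] by simp
    show "0 \<le> E k i \<omega> \<and> E k i \<omega> \<le> 1" for i \<omega> by (simp add: E_def indicator_def)
    show "expectation (E k i) = p0 k" if "i \<ge> 1" for i
    proof -
      have "expectation (E k i) = measure M ({\<omega>\<in>space M. X i \<omega> = k} \<inter> space M)"
        unfolding E_def[abs_def] by (rule Bochner_Integration.integral_indicator)
      also have "{\<omega>\<in>space M. X i \<omega> = k} \<inter> space M = {\<omega>\<in>space M. X i \<omega> = k}" by auto
      finally show ?thesis using distr[OF that] by simp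
    qed
    show "expectation (\<lambda>\<omega>. E k i \<omega> * E k j \<omega>) = (p0 k)\<^sup>2"
      if "i \<ge> 1" "j \<ge> 1" "i \<noteq> j" for i j
    proof -
      have "(\<lambda>\<omega>. E k i \<omega> * E k j \<omega>) = indicator ({\<omega>\<in>space M. X i \<omega> = k} \<inter> {\<omega>\<in>space M. X j \<omega> = k})"
        by (auto simp: E_def indicator_def)
      hence "expectation (\<lambda>\<omega>. E k i \<omega> * E k j \<omega>) = prob (({\<omega>\<in>space M. X i \<omega> = k} \<inter> {\<omega>\<in>space M. X j \<omega> = k}) \<inter> space M)"
        by (simp only: Bochner_Integration.integral_indicator)
      also have "({\<omega>\<in>space M. X i \<omega> = k} \<inter> {\<omega>\<in>space M. X j \<omega> = k}) \<inter> space M = {\<omega>\<in>space M. X i \<omega> = k} \<inter> {\<omega>\<in>space M. X j \<omega> = k}"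
        by auto
      also have "{\<omega>\<in>space M. X i \<omega> = k} \<inter> {\<omega>\<in>space M. X j \<omega> = k} = (\<Inter>l\<in>{i,j}. X l -` {k} \<inter> space M)"
        by auto
      also have "prob \<dots> = (\<Prod>l\<in>{i,j}. prob (X l -` {k} \<inter> space M))"
        using that by (intro indep_varsD[OF indep]) auto
      also have "\<dots> = prob (X i -` {k} \<inter> space M) * prob (X j -` {k} \<inter> space M)"
        using that by simp
      also have "X i -` {k} \<inter> space M = {\<omega>\<in>space M. X i \<omega> = k}" by auto
      also have "X j -` {k} \<inter> space M = {\<omega>\<in>space M. X j \<omega> = k}" by auto
      finally show ?thesis using distr[OF that(1)] distr[OF that(2)] by (simp add: power2_eq_square)
    qed
  qed
  have emp: "empirical_pmf X n \<omega> k = (\<Sum>i\<in>{1..n}. E k i \<omega>) / real n" if "\<omega> \<in> space M" for n \<omega> k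
  proof -
    have "(\<Sum>i\<in>{1..n}. E k i \<omega>) = (\<Sum>i\<in>{1..n}. if X i \<omega> = k then 1 else 0)"
      using that by (intro sum.cong) (auto simp: E_def indicator_def)
    also have "\<dots> = real (card {i\<in>{1..n}. X i \<omega> = k})" by (rule card_filter_sum[symmetric]) simp
    finally show ?thesis by (simp add: empirical_pmf_def)
  qed
  have "AE \<omega> in M. \<forall>k. (\<lambda>n. empirical_pmf X n \<omega> k) \<longlonglongrightarrow> p0 k"
  proof -
    have "AE \<omega> in M. \<forall>k. (\<lambda>n. (\<Sum>i\<in>{1..n}. E k i \<omega>) / real n) \<longlonglongrightarrow> p0 k"
      using lim_k by (simp add: AE_all_countable)
    thus ?thesis
      by (rule AE_mp[OF _ AE_I2]) (auto simp: emp)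
  qed
  thus ?thesis
  proof (rule AE_mp, intro AE_I2 impI)
    fix \<omega> assume lim: "\<forall>k. (\<lambda>n. empirical_pmf X n \<omega> k) \<longlonglongrightarrow> p0 k"
    define e where "e n = empirical_pmf X n \<omega>" for n
    have zero_out: "e n k = 0" if "k \<notin> (\<lambda>i. X i \<omega>) ` {1..n}" for n k
    proof -
      have "{i\<in>{1..n}. X i \<omega> = k} = {}" using that by auto
      thus ?thesis by (simp add: e_def empirical_pmf_def)
    qed
    have e0: "0 \<le> e n k" for n k by (simp add: e_def empirical_pmf_def)
    have e1: "e n sums 1" if "n \<ge> 1" for n
    proof -
      have "e n sums (\<Sum>k\<in>(\<lambda>i. X i \<omega>) ` {1..n}. e n k)"
        by (rule sums_finite) (auto intro: zero_out)
      also have "(\<Sum>k\<in>(\<lambda>i. X i \<omega>) ` {1..n}. e n k)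
          = (\<Sum>k\<in>(\<lambda>i. X i \<omega>) ` {1..n}. real (card {i\<in>{1..n}. X i \<omega> = k})) / real n"
        by (simp add: e_def empirical_pmf_def sum_divide_distrib)
      also have "\<dots> = 1"
      proof -
        have "(\<Sum>k\<in>(\<lambda>i. X i \<omega>) ` {1..n}. real (card {i\<in>{1..n}. X i \<omega> = k})) = real n"
          by (rule sum_card_partition)
        thus ?thesis using that by simp
      qed
      finally show ?thesis .
    qed
    have esq: "summable (\<lambda>k. (e n k)\<^sup>2)" for n
      by (rule summable_finite[of "(\<lambda>i. X i \<omega>) ` {1..n}"]) (auto simp: zero_out)
    have G: "(\<lambda>n. \<Sum>k. (e n k - p0 k)\<^sup>2) \<longlonglongrightarrow> 0"
      by (rule scheffe[OF e0 e1 p0nn p0s]) (use lim in \<open>auto simp: e_def\<close>)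
    have bnd: "0 \<le> seq_norm r (\<lambda>k. lse X n \<omega> k - p0 k) \<and>
               seq_norm r (\<lambda>k. lse X n \<omega> k - p0 k) \<le> sqrt (4 * (\<Sum>k. (e n k - p0 k)\<^sup>2))" for n
    proof -
      have ex: "\<exists>!p. p \<in> convex_l2 \<and> (\<forall>q\<in>convex_l2. Phi (e n) p \<le> Phi (e n) q)"
        by (rule lse_exists[OF esq])
      have "lse X n \<omega> = (THE p. p \<in> convex_l2 \<and> (\<forall>q\<in>convex_l2. Phi (e n) p \<le> Phi (e n) q))"
        by (simp add: lse_def e_def)
      hence lp: "lse X n \<omega> \<in> convex_l2 \<and> (\<forall>q\<in>convex_l2. Phi (e n) (lse X n \<omega>) \<le> Phi (e n) q)"
        using theI'[OF ex] by simp
      have lb: "summable (\<lambda>k. (lse X n \<omega> k - p0 k)\<^sup>2) \<and>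
          (\<Sum>k. (lse X n \<omega> k - p0 k)\<^sup>2) \<le> 4 * (\<Sum>k. (e n k - p0 k)\<^sup>2)"
        using lp p0C by (intro lse_bound[OF esq p0C]) auto
      have "0 \<le> seq_norm r (\<lambda>k. lse X n \<omega> k - p0 k) \<and>
            seq_norm r (\<lambda>k. lse X n \<omega> k - p0 k) \<le> sqrt (\<Sum>k. (lse X n \<omega> k - p0 k)\<^sup>2)"
        using lb r by (intro norm_bound) auto
      moreover have "sqrt (\<Sum>k. (lse X n \<omega> k - p0 k)\<^sup>2) \<le> sqrt (4 * (\<Sum>k. (e n k - p0 k)\<^sup>2))"
        using lb by simp
      ultimately show ?thesis by linarith
    qed
    have "(\<lambda>n. sqrt (4 * (\<Sum>k. (e n k - p0 k)\<^sup>2))) \<longlonglongrightarrow> sqrt (4 * 0)"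
      by (intro tendsto_intros G)
    hence up: "(\<lambda>n. sqrt (4 * (\<Sum>k. (e n k - p0 k)\<^sup>2))) \<longlonglongrightarrow> 0" by simp
    show "(\<lambda>n. seq_norm r (\<lambda>k. lse X n \<omega> k - p0 k)) \<longlonglongrightarrow> 0"
      by (rule tendsto_sandwich[OF _ _ tendsto_const up]) (use bnd in auto)
  qed
qed

end
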